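(* Let $X$ be a path-connected locally equiconnected space (i.e. the diagonal $X\to X\times X$ is a closed cofibration) and let $x_0\in X$. Then $\mathrm{TC}(X)=\mathrm{TC}^*(X)$, where $\mathrm{TC}^*$ is computed with base point $x_0$.
   Context: $\mathrm{TC}(X)$ (Farber's topological complexity) is the least $k$ such that $X\times X$ has an open cover $U_0,\dots,U_k$ with each $U_i$ admitting a continuous section $s_i:U_i\to X^I$ of $\pi:X^I\to X\times X$, $\pi(\gamma)=(\gamma(0),\gamma(1))$ (i.e. $\pi\circ s_i$ is the inclusion). The pointed topological complexity $\mathrm{TC}^*(X)$ of $(X,x_0)$ is the least $k$ (or $\infty$) such that $X\times X$ has an open cover $U_0,\dots,U_k$ with $(x_0,x_0)\in U_i$ for all $i$ and continuous sections $s_i:U_i\to X^I$ of $\pi$ with $s_i(x_0,x_0)=c_{x_0}$, the constant path at $x_0$. *)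

theory Defs
  imports "HOL-Analysis.Analysis" "HOL-Library.Extended_Nat"
begin

abbreviation unit_interval :: "real topology" where
  "unit_interval \<equiv> top_of_set {0..1}"

text \<open>Test spaces range over topologies on the
  type 'a \<times> real, which contains the universal test space Y \<times> 0 \<union> A \<times> I.\<close>
definition cofibration :: "'a topology \<Rightarrow> 'a set \<Rightarrow> bool" where
  "cofibration Y A \<longleftrightarrow> A \<subseteq> topspace Y \<and>
     (\<forall>(Z :: ('a \<times> real) topology) f h.
        continuous_map Y Z f \<and>
        continuous_map (prod_topology (subtopology Y A) unit_interval) Z h \<and>
        (\<forall>a\<in>A. h (a, 0) = f a)
        \<longrightarrow> (\<exists>H. continuous_map (prod_topology Y unit_interval) Z H \<and>
                 (\<forall>y\<in>topspace Y. H (y, 0) = f y) \<and>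
                 (\<forall>a\<in>A. \<forall>t\<in>{0..1}. H (a, t) = h (a, t))))"

definition locally_equiconnected :: "'a topology \<Rightarrow> bool" where
  "locally_equiconnected X \<longleftrightarrow>
     (let D = {(x, x) | x. x \<in> topspace X}
      in closedin (prod_topology X X) D \<and> cofibration (prod_topology X X) D)"

text \<open>A continuous section U \<rightarrow> X^I of the endpoint map, in adjoint form:
  a continuous map U \<times> I \<rightarrow> X (exponential law; I is compact Hausdorff).\<close>
definition motion_planner :: "'a topology \<Rightarrow> ('a \<times> 'a) set \<Rightarrow> (('a \<times> 'a) \<times> real \<Rightarrow> 'a) \<Rightarrow> bool" where
  "motion_planner X U s \<longleftrightarrow>
     continuous_map (prod_topology (subtopology (prod_topology X X) U) unit_interval) X s \<and>
     (\<forall>a b. (a, b) \<in> U \<longrightarrow> s ((a, b), 0) = a \<and> s ((a, b), 1) = b)"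

definition tc_cover :: "'a topology \<Rightarrow> nat \<Rightarrow> bool" where
  "tc_cover X k \<longleftrightarrow>
     (\<exists>(U :: nat \<Rightarrow> ('a \<times> 'a) set) s.
        (\<forall>i\<le>k. openin (prod_topology X X) (U i) \<and> motion_planner X (U i) (s i)) \<and>
        topspace (prod_topology X X) \<subseteq> (\<Union>i\<le>k. U i))"

definition tc_pointed_cover :: "'a topology \<Rightarrow> 'a \<Rightarrow> nat \<Rightarrow> bool" where
  "tc_pointed_cover X x0 k \<longleftrightarrow>
     (\<exists>(U :: nat \<Rightarrow> ('a \<times> 'a) set) s.
        (\<forall>i\<le>k. openin (prod_topology X X) (U i) \<and> motion_planner X (U i) (s i) \<and>
               (x0, x0) \<in> U i \<and> (\<forall>t\<in>{0..1}. s i ((x0, x0), t) = x0)) \<and>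
        topspace (prod_topology X X) \<subseteq> (\<Union>i\<le>k. U i))"

text \<open>Farber's topological complexity (reduced convention), \<infinity> if no finite cover exists.\<close>
definition TC :: "'a topology \<Rightarrow> enat" where
  "TC X = (if \<exists>k. tc_cover X k then enat (LEAST k. tc_cover X k) else \<infinity>)"

definition TC_pointed :: "'a topology \<Rightarrow> 'a \<Rightarrow> enat" where
  "TC_pointed X x0 = (if \<exists>k. tc_pointed_cover X x0 k
                      then enat (LEAST k. tc_pointed_cover X x0 k) else \<infinity>)"

end

theory Submission imports Defs begin

definition clamp01 :: "real \<Rightarrow> real" where "clamp01 r = max 0 (min 1 r)"

lemma clamp01_in [simp]: "clamp01 r \<in> {0..1}"
  by (auto simp: clamp01_def)

lemma clamp01_ge [simp]: "0 \<le> clamp01 r" and clamp01_le [simp]: "clamp01 r \<le> 1"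
  by (auto simp: clamp01_def)

lemma clamp01_id [simp]: "r \<in> {0..1} \<Longrightarrow> clamp01 r = r"
  by (auto simp: clamp01_def)

lemma cm_clamp01:
  assumes "continuous_map Z euclideanreal f"
  shows "continuous_map Z unit_interval (\<lambda>x. clamp01 (f x))"
  unfolding clamp01_def
  by (rule continuous_map_into_subtopology) (auto intro!: continuous_intros assms)

lemma paste_open2:
  assumes S: "openin Z S" and T: "openin Z T" and cov: "topspace Z \<subseteq> S \<union> T"
    and f: "continuous_map (subtopology Z S) Y f" and g: "continuous_map (subtopology Z T) Y g"
    and hf: "\<And>x. x \<in> topspace Z \<Longrightarrow> x \<in> S \<Longrightarrow> h x = f x"
    and hg: "\<And>x. x \<in> topspace Z \<Longrightarrow> x \<in> T \<Longrightarrow> h x = g x"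
  shows "continuous_map Z Y h"
proof (rule pasting_lemma[where I="{True,False}" and T="\<lambda>b. if b then S else T"
      and f="\<lambda>b. if b then f else g"])
  fix x assume x: "x \<in> topspace Z"
  show "\<exists>j. j \<in> {True, False} \<and> x \<in> (if j then S else T) \<and> h x = (if j then f else g) x"
  proof (cases "x \<in> S")
    case True then show ?thesis using hf x by (intro exI[of _ True]) simp
  next
    case False then have "x \<in> T" using cov x by blast
    then show ?thesis using hg x by (intro exI[of _ False]) simp
  qed
next
  fix i j x assume "i \<in> {True, False}" "j \<in> {True, False}" "x \<in> topspace Z \<inter> (if i then S else T) \<inter> (if j then S else T)"
  then show "(if i then f else g) x = (if j then f else g) x"
    using hf hg by (cases i; cases j) force+
qed (use S T f g in auto)

lemma cm_prod_sub_id: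
  "continuous_map (prod_topology (subtopology Y D) U) (prod_topology Y U) (\<lambda>p. p)"
proof -
  have "prod_topology (subtopology Y D) U = subtopology (prod_topology Y U) (D \<times> topspace U)"
    by (simp add: subtopology_Times)
  then show ?thesis by (simp add: continuous_map_from_subtopology)
qed

lemma lec_data:
  assumes lec: "locally_equiconnected X" and x0: "x0 \<in> topspace X"
  obtains phi lam where
    "continuous_map X euclideanreal phi" "phi x0 = 0"
    "continuous_map (prod_topology (subtopology X {x \<in> topspace X. phi x < 1}) unit_interval) X lam"
    "\<And>x. x \<in> topspace X \<Longrightarrow> lam (x,0) = x"
    "\<And>x. x \<in> topspace X \<Longrightarrow> phi x < 1 \<Longrightarrow> lam (x,1) = x0"
    "\<And>r. r \<in> {0..1} \<Longrightarrow> lam (x0, r) = x0"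
proof -
  define Y where "Y = prod_topology X X"
  define D where "D = {(x, x) | x. x \<in> topspace X}"
  have cof: "cofibration Y D" using lec by (simp add: locally_equiconnected_def Y_def D_def Let_def)
  define T where "T = topspace Y \<times> {0::real} \<union> D \<times> {0..1}"
  define Z where "Z = subtopology (prod_topology Y unit_interval) T"
  have f: "continuous_map Y Z (\<lambda>y. (y, 0))"
    unfolding Z_def by (rule continuous_map_into_subtopology) (auto simp: T_def intro!: continuous_intros)
  have h: "continuous_map (prod_topology (subtopology Y D) unit_interval) Z (\<lambda>p. p)"
    unfolding Z_def
    by (rule continuous_map_into_subtopology[OF cm_prod_sub_id]) (auto simp: T_def)
  have "\<exists>H. continuous_map (prod_topology Y unit_interval) Z H \<and>
                 (\<forall>y\<in>topspace Y. H (y, 0) = (y,0)) \<and>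
                 (\<forall>a\<in>D. \<forall>t\<in>{0..1}. H (a, t) = (a, t))"
    using cof[unfolded cofibration_def, THEN conjunct2, rule_format, of Z "\<lambda>y. (y, 0)" "\<lambda>p. p"] f h
    by auto
  then obtain R where R: "continuous_map (prod_topology Y unit_interval) Z R"
    and R0: "\<And>y. y \<in> topspace Y \<Longrightarrow> R (y,0) = (y,0)"
    and RD: "\<And>a t. a \<in> D \<Longrightarrow> t \<in> {0..1} \<Longrightarrow> R (a,t) = (a,t)" by blast
  have cR: "continuous_map (prod_topology Y unit_interval) (prod_topology Y unit_interval) R"
    using R unfolding Z_def by (rule continuous_map_into_fulltopology)
  have RT: "R p \<in> T" if "p \<in> topspace (prod_topology Y unit_interval)" for p
    using continuous_map_image_subset_topspace[OF R] that unfolding Z_def by auto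
  have c1: "continuous_map (prod_topology X unit_interval) (prod_topology Y unit_interval) (\<lambda>p. ((fst p, x0), snd p))"
    by (auto simp: Y_def x0 intro!: continuous_intros)
  have c2: "continuous_map X (prod_topology Y unit_interval) (\<lambda>x. ((x, x0), 1))"
    by (auto simp: Y_def x0 intro!: continuous_intros)
  have c3: "continuous_map X (prod_topology Y unit_interval) (\<lambda>x. R ((x, x0), 1))"
    using continuous_map_compose[OF c2 cR] by (simp add: o_def)
  define phi where "phi x = 1 - snd (R ((x,x0),1))" for x
  have cphi: "continuous_map X euclideanreal phi"
  proof -
    have "continuous_map X unit_interval (\<lambda>x. snd (R ((x, x0), 1)))"
      using continuous_map_snd_of[OF c3] by (simp add: o_def)
    then have "continuous_map X euclideanreal (\<lambda>x. snd (R ((x, x0), 1)))"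
      by (rule continuous_map_into_fulltopology)
    then show ?thesis unfolding phi_def by (intro continuous_intros)
  qed
  have x0D: "(x0,x0) \<in> D" using x0 by (auto simp: D_def)
  have phi0: "phi x0 = 0" using RD[OF x0D, of 1] by (simp add: phi_def)
  define S where "S = {x \<in> topspace X. phi x < 1}"
  define lam where "lam p = (if snd p \<le> 1/2 then fst (fst (R ((fst p, x0), clamp01 (2 * snd p))))
                     else snd (fst (R ((fst p, x0), clamp01 (2 - 2 * snd p)))))" for p
  have diag: "fst (fst (R ((x, x0), 1))) = snd (fst (R ((x, x0), 1)))" if "x \<in> S" for x
  proof -
    have xX: "x \<in> topspace X" using that by (simp add: S_def)
    have "R ((x, x0), 1) \<in> T" by (rule RT) (auto simp: Y_def xX x0)
    moreover have "snd (R ((x, x0), 1)) > 0" using that by (simp add: S_def phi_def)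
    ultimately have "fst (R ((x, x0), 1)) \<in> D" unfolding T_def by auto
    then show ?thesis by (auto simp: D_def)
  qed
  have clam: "continuous_map (prod_topology (subtopology X S) unit_interval) X lam"
  proof -
    let ?W = "prod_topology (subtopology X S) unit_interval"
    have cW: "continuous_map ?W (prod_topology X unit_interval) (\<lambda>p. p)"
      by (rule cm_prod_sub_id)
    have cpair: "continuous_map ?W (prod_topology Y unit_interval) (\<lambda>p. ((fst p, x0), clamp01 (g p)))"
      if "continuous_map ?W euclideanreal g" for g
    proof -
      have "continuous_map ?W X fst"
        using continuous_map_compose[OF cW continuous_map_fst] by (simp add: o_def)
      then show ?thesis using that
        by (auto simp: Y_def x0 intro!: continuous_intros cm_clamp01)
    qed
    have p1: "continuous_map ?W X (\<lambda>p. fst (fst (R ((fst p, x0), clamp01 (2 * snd p)))))"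
    proof -
      have "continuous_map ?W euclideanreal (\<lambda>p. 2 * snd p)"
        using continuous_map_compose[OF continuous_map_snd continuous_map_into_fulltopology[OF continuous_map_id]]
        by (intro continuous_intros) (simp add: o_def)
      from continuous_map_compose[OF cpair[OF this] cR]
      have "continuous_map ?W (prod_topology Y unit_interval) (\<lambda>p. R ((fst p, x0), clamp01 (2 * snd p)))"
        by (simp add: o_def)
      from continuous_map_fst_of[OF continuous_map_fst_of[OF this, unfolded Y_def]]
      show ?thesis by (simp add: o_def Y_def)
    qed
    have p2: "continuous_map ?W X (\<lambda>p. snd (fst (R ((fst p, x0), clamp01 (2 - 2 * snd p)))))"
    proof -
      have "continuous_map ?W euclideanreal (\<lambda>p. 2 - 2 * snd p)"
        using continuous_map_compose[OF continuous_map_snd continuous_map_into_fulltopology[OF continuous_map_id]]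
        by (intro continuous_intros) (simp add: o_def)
      from continuous_map_compose[OF cpair[OF this] cR]
      have "continuous_map ?W (prod_topology Y unit_interval) (\<lambda>p. R ((fst p, x0), clamp01 (2 - 2 * snd p)))"
        by (simp add: o_def)
      from continuous_map_snd_of[OF continuous_map_fst_of[OF this, unfolded Y_def]]
      show ?thesis by (simp add: o_def Y_def)
    qed
    have csnd: "continuous_map ?W euclideanreal snd"
      using continuous_map_compose[OF continuous_map_snd continuous_map_into_fulltopology[OF continuous_map_id]]
      by (simp add: o_def)
    show ?thesis unfolding lam_def
    proof (rule continuous_map_cases_le[OF csnd continuous_map_canonical_const[of _ "1/2"]
            continuous_map_from_subtopology[OF p1] continuous_map_from_subtopology[OF p2]])
      fix p assume p: "p \<in> topspace ?W" "snd p = 1/2"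
      then have "fst p \<in> S" "2 * snd p = 1" "2 - 2 * snd p = 1" by auto
      then show "fst (fst (R ((fst p, x0), clamp01 (2 * snd p)))) = snd (fst (R ((fst p, x0), clamp01 (2 - 2 * snd p))))"
        using diag by simp
    qed
  qed
  show ?thesis
  proof (rule that[of phi lam])
    show "continuous_map (prod_topology (subtopology X {x \<in> topspace X. phi x < 1}) unit_interval) X lam"
      using clam by (simp add: S_def)
    show "lam (x, 0) = x" if "x \<in> topspace X" for x
      using R0[of "(x,x0)"] that x0 by (simp add: lam_def Y_def clamp01_def)
    show "lam (x, 1) = x0" if "x \<in> topspace X" "phi x < 1" for x
      using R0[of "(x,x0)"] that x0 by (simp add: lam_def Y_def clamp01_def)
    show "lam (x0, r) = x0" if "r \<in> {0..1}" for r
      using RD[OF x0D, of "clamp01 (2*r)"] RD[OF x0D, of "clamp01 (2-2*r)"] by (simp add: lam_def)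
  qed (use cphi phi0 in auto)
qed

lemma cm_clamp01_real:
  assumes "continuous_map Z euclideanreal f"
  shows "continuous_map Z euclideanreal (\<lambda>x. clamp01 (f x))"
  unfolding clamp01_def by (intro continuous_intros assms)

lemma open_lt: "continuous_map Z euclideanreal f \<Longrightarrow> openin Z {x \<in> topspace Z. f x < c}"
  using openin_continuous_map_preimage[of Z euclideanreal f "{..<c}"] by simp

lemma open_gt: "continuous_map Z euclideanreal f \<Longrightarrow> openin Z {x \<in> topspace Z. c < f x}"
  using openin_continuous_map_preimage[of Z euclideanreal f "{c<..}"] by simp

lemma closed_le: "continuous_map Z euclideanreal f \<Longrightarrow> closedin Z {x \<in> topspace Z. f x \<le> c}"
  using closedin_continuous_map_preimage[of Z euclideanreal f "{..c}"] by simp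

lemma cm_snd_real: "continuous_map (prod_topology Y (top_of_set T)) euclideanreal snd"
  using continuous_map_into_fulltopology[OF continuous_map_snd] .

lemma cm_comp: "continuous_map Z Y g \<Longrightarrow> continuous_map Y W F \<Longrightarrow> continuous_map Z W (\<lambda>p. F (g p))"
  using continuous_map_compose[of Z Y g W F] by (simp add: o_def)

lemma subQ:
  "subtopology (prod_topology (subtopology Y W) T) {p \<in> topspace (prod_topology (subtopology Y W) T). fst p \<in> B}
   = prod_topology (subtopology Y (W \<inter> B)) T"
proof -
  have "{p \<in> topspace (prod_topology (subtopology Y W) T). fst p \<in> B}
        = topspace (prod_topology (subtopology Y W) T) \<inter> (B \<times> UNIV)" by auto
  then have "subtopology (prod_topology (subtopology Y W) T) {p \<in> topspace (prod_topology (subtopology Y W) T). fst p \<in> B}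
     = subtopology (prod_topology (subtopology Y W) T) (topspace (prod_topology (subtopology Y W) T) \<inter> (B \<times> UNIV))"
    by (simp only:)
  also have "\<dots> = subtopology (prod_topology (subtopology Y W) T) (B \<times> UNIV)"
    by (rule subtopology_restrict)
  also have "\<dots> = prod_topology (subtopology Y (W \<inter> B)) T"
    by (simp add: subtopology_Times subtopology_subtopology)
  finally show ?thesis .
qed

lemma mult01: "(a::real) \<in> {0..1} \<Longrightarrow> b \<in> {0..1} \<Longrightarrow> a * b \<in> {0..1}"
  by (auto intro: mult_le_one)

lemma pointed_from_cover:
  fixes X :: "'a topology"
  assumes x0: "x0 \<in> topspace X"
    and cphi: "continuous_map X euclideanreal phi" and phi0: "phi x0 = 0"
    and clam: "continuous_map (prod_topology (subtopology X {x \<in> topspace X. phi x < 1}) unit_interval) X lam"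
    and lam0: "\<And>x. x \<in> topspace X \<Longrightarrow> lam (x,0) = x"
    and lam1: "\<And>x. x \<in> topspace X \<Longrightarrow> phi x < 1 \<Longrightarrow> lam (x,1) = x0"
    and lamx0: "\<And>r. r \<in> {0..1} \<Longrightarrow> lam (x0, r) = x0"
    and cov: "tc_cover X k"
  shows "tc_pointed_cover X x0 k"
proof -
  let ?XX = "prod_topology X X"
  let ?ZI = "prod_topology X unit_interval"
  from cov obtain U s where Us: "\<forall>i\<le>k. openin ?XX (U i) \<and> motion_planner X (U i) (s i)"
    and cover: "topspace ?XX \<subseteq> (\<Union>i\<le>k. U i)" unfolding tc_cover_def by blast
  have opU: "\<And>i. i \<le> k \<Longrightarrow> openin ?XX (U i)" using Us by auto
  have cs: "\<And>i. i \<le> k \<Longrightarrow> continuous_map (prod_topology (subtopology ?XX (U i)) unit_interval) X (s i)"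
    and s0: "\<And>i a b. i \<le> k \<Longrightarrow> (a,b) \<in> U i \<Longrightarrow> s i ((a,b),0) = a"
    and s1: "\<And>i a b. i \<le> k \<Longrightarrow> (a,b) \<in> U i \<Longrightarrow> s i ((a,b),1) = b"
    using Us by (auto simp: motion_planner_def)
  define e where "e = (x0, x0)"
  have eX: "e \<in> topspace ?XX" using x0 by (simp add: e_def)
  obtain m where m: "m \<le> k" "e \<in> U m" using cover eX by blast
  define kap where "kap x = clamp01 (2 - 4 * phi x)" for x
  define mu where "mu x = clamp01 (2 - 16 * phi x)" for x
  define nu where "nu x = clamp01 (2 - 32 * phi x)" for x
  have ckap: "continuous_map X euclideanreal kap" unfolding kap_def
    by (intro cm_clamp01_real continuous_intros cphi)
  have cmu: "continuous_map X euclideanreal mu" unfolding mu_def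
    by (intro cm_clamp01_real continuous_intros cphi)
  have cnu: "continuous_map X euclideanreal nu" unfolding nu_def
    by (intro cm_clamp01_real continuous_intros cphi)
  have kap1: "kap x = 1" if "phi x \<le> 1/4" for x using that by (simp add: kap_def clamp01_def)
  have kap0: "kap x = 0" if "phi x \<ge> 1/2" for x using that by (simp add: kap_def clamp01_def)
  have mu1: "mu x = 1" if "phi x \<le> 1/16" for x using that by (simp add: mu_def clamp01_def)
  have mu0: "mu x = 0" if "phi x \<ge> 1/8" for x using that by (simp add: mu_def clamp01_def)
  have nupos: "phi x < 1/16" if "nu x > 0" for x using that by (auto simp: nu_def clamp01_def)
  have nux0: "nu x0 = 1" by (simp add: nu_def phi0 clamp01_def)
  have kap01: "kap x \<in> {0..1}" and mu01: "mu x \<in> {0..1}" and nu01: "nu x \<in> {0..1}" for x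
    by (simp_all add: kap_def mu_def nu_def)
  define A where "A p = (if phi (fst p) < 1 then lam (fst p, snd p * kap (fst p)) else fst p)" for p :: "'a \<times> real"
  have cphi1: "continuous_map ?ZI euclideanreal (\<lambda>p. phi (fst p))"
    using cm_comp[OF continuous_map_fst cphi] .
  have cA: "continuous_map ?ZI X A"
  proof (rule paste_open2[OF open_lt[OF cphi1, of 1] open_gt[OF cphi1, of "1/2"]])
    show "topspace ?ZI \<subseteq> {p \<in> topspace ?ZI. phi (fst p) < 1} \<union> {p \<in> topspace ?ZI. 1/2 < phi (fst p)}"
      by auto
    let ?S = "{p \<in> topspace ?ZI. phi (fst p) < 1}"
    have "continuous_map (subtopology ?ZI ?S) (prod_topology (subtopology X {x \<in> topspace X. phi x < 1}) unit_interval)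
            (\<lambda>p. (fst p, snd p * kap (fst p)))"
    proof (intro continuous_map_pairedI continuous_map_into_subtopology)
      show "continuous_map (subtopology ?ZI ?S) X fst"
        by (rule continuous_map_from_subtopology[OF continuous_map_fst])
      show "fst \<in> topspace (subtopology ?ZI ?S) \<rightarrow> {x \<in> topspace X. phi x < 1}" by auto
      show "continuous_map (subtopology ?ZI ?S) euclideanreal (\<lambda>p. snd p * kap (fst p))"
        by (intro continuous_map_from_subtopology continuous_intros cm_snd_real cm_comp[OF continuous_map_fst ckap])
      show "(\<lambda>p. snd p * kap (fst p)) \<in> topspace (subtopology ?ZI ?S) \<rightarrow> {0..1}"
        using kap01 by (auto intro!: mult01)
    qed
    then show "continuous_map (subtopology ?ZI ?S) X (\<lambda>p. lam (fst p, snd p * kap (fst p)))"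
      using cm_comp[OF _ clam] by blast
    show "continuous_map (subtopology ?ZI {p \<in> topspace ?ZI. 1/2 < phi (fst p)}) X fst"
      by (rule continuous_map_from_subtopology[OF continuous_map_fst])
    show "A p = lam (fst p, snd p * kap (fst p))" if "p \<in> topspace ?ZI" "p \<in> ?S" for p
      using that by (simp add: A_def)
    show "A p = fst p" if "p \<in> topspace ?ZI" "p \<in> {p \<in> topspace ?ZI. 1/2 < phi (fst p)}" for p
      using that kap0[of "fst p"] lam0[of "fst p"] by (auto simp: A_def)
  qed
  have A0: "A (x, 0) = x" if "x \<in> topspace X" for x using that lam0 by (simp add: A_def)
  have A1: "A (x, 1) = x0" if "x \<in> topspace X" "phi x \<le> 1/4" for x
    using that lam1 kap1 by (simp add: A_def)
  have Ax0: "A (x0, r) = x0" if "r \<in> {0..1}" for r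
    using that lamx0 kap01[of x0] mult01 phi0 by (simp add: A_def)
  have cAc: "continuous_map Z X (\<lambda>p. A (f p, clamp01 (g p)))"
    if "continuous_map Z X f" "continuous_map Z euclideanreal g" for Z :: "'z topology" and f g
    by (rule cm_comp[OF _ cA]) (intro continuous_map_pairedI cm_clamp01 that)
  define gam where "gam r = s m (e, r)" for r
  have cgam: "continuous_map unit_interval X gam"
  proof -
    have "continuous_map unit_interval (prod_topology (subtopology ?XX (U m)) unit_interval) (\<lambda>r. (e, r))"
      using eX m by (intro continuous_map_pairedI) auto
    then show ?thesis unfolding gam_def using cm_comp[OF _ cs[OF m(1)]] by blast
  qed
  have gam0: "gam 0 = x0" and gam1: "gam 1 = x0"
    using s0[OF m(1), of x0 x0] s1[OF m(1), of x0 x0] m(2) by (simp_all add: gam_def e_def)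
  define Bp where "Bp p = (if phi (fst p) < 1/4 then gam (snd p * mu (fst p)) else A (fst p, 1))" for p :: "'a \<times> real"
  have cA1: "continuous_map ?ZI X (\<lambda>p. A (fst p, 1))"
    by (rule cm_comp[OF _ cA]) (auto intro!: continuous_map_pairedI continuous_map_fst)
  have cBp: "continuous_map ?ZI X Bp"
  proof (rule paste_open2[OF open_lt[OF cphi1, of "1/4"] open_gt[OF cphi1, of "1/8"]])
    show "topspace ?ZI \<subseteq> {p \<in> topspace ?ZI. phi (fst p) < 1/4} \<union> {p \<in> topspace ?ZI. 1/8 < phi (fst p)}"
      by auto
    have "continuous_map ?ZI unit_interval (\<lambda>p. snd p * mu (fst p))"
      using mu01 by (intro continuous_map_into_subtopology continuous_intros cm_snd_real cm_comp[OF continuous_map_fst cmu])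
        (auto intro!: mult01)
    from cm_comp[OF this cgam]
    show "continuous_map (subtopology ?ZI {p \<in> topspace ?ZI. phi (fst p) < 1/4}) X (\<lambda>p. gam (snd p * mu (fst p)))"
      by (rule continuous_map_from_subtopology)
    show "continuous_map (subtopology ?ZI {p \<in> topspace ?ZI. 1/8 < phi (fst p)}) X (\<lambda>p. A (fst p, 1))"
      by (rule continuous_map_from_subtopology[OF cA1])
    show "Bp p = gam (snd p * mu (fst p))" if "p \<in> topspace ?ZI" "p \<in> {p \<in> topspace ?ZI. phi (fst p) < 1/4}" for p
      using that by (simp add: Bp_def)
    show "Bp p = A (fst p, 1)" if "p \<in> topspace ?ZI" "p \<in> {p \<in> topspace ?ZI. 1/8 < phi (fst p)}" for p
    proof (cases "phi (fst p) < 1/4")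
      case True
      then have "mu (fst p) = 0" "A (fst p, 1) = x0" using that mu0 A1 by auto
      then show ?thesis using True gam0 by (simp add: Bp_def)
    qed (simp add: Bp_def)
  qed
  have Bp0: "Bp (x, 0) = A (x, 1)" if "x \<in> topspace X" for x
    using that A1[of x] gam0 by (simp add: Bp_def)
  have Bpg: "Bp (x, r) = gam r" if "phi x \<le> 1/16" for x r
    using that mu1[of x] by (simp add: Bp_def)
  define H1 where "H1 z = (A (fst z, 1), Bp (snd z, 1))" for z :: "'a \<times> 'a"
  have cH1: "continuous_map ?XX ?XX H1"
  proof -
    have "continuous_map ?XX X (\<lambda>z. A (fst z, 1))"
      by (rule cm_comp[OF _ cA]) (auto intro!: continuous_map_pairedI continuous_map_fst)
    moreover have "continuous_map ?XX X (\<lambda>z. Bp (snd z, 1))"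
      by (rule cm_comp[OF _ cBp]) (auto intro!: continuous_map_pairedI continuous_map_snd)
    ultimately show ?thesis unfolding H1_def by (rule continuous_map_pairedI)
  qed
  have H1e: "H1 z = e" if "phi (fst z) \<le> 1/16" "phi (snd z) \<le> 1/16" "z \<in> topspace ?XX" for z
    using that A1[of "fst z"] Bpg[of "snd z" 1] gam1 by (auto simp: H1_def e_def)
  define V where "V i = {z \<in> topspace ?XX. H1 z \<in> U i}" for i
  have opV: "openin ?XX (V i)" if "i \<le> k" for i
    unfolding V_def using openin_continuous_map_preimage[OF cH1 opU[OF that]] .
  define Q where "Q W = prod_topology (subtopology ?XX W) unit_interval" for W
  define Mst where "Mst sf uf p = (if snd p \<le> 1/4 then A (fst (fst p), clamp01 (4 * snd p))
       else if snd p \<le> 1/2 then sf (H1 (fst p), clamp01 (4 * snd p - 1) * (1 - uf (fst p)))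
       else if snd p \<le> 3/4 then Bp (snd (fst p), clamp01 (3 - 4 * snd p) * (1 - uf (fst p)))
       else A (snd (fst p), clamp01 (4 - 4 * snd p)))"
    for sf :: "('a \<times> 'a) \<times> real \<Rightarrow> 'a" and uf :: "'a \<times> 'a \<Rightarrow> real" and p
  have gen: "continuous_map (Q W) X (Mst (s i) uf)"
    if W: "\<And>z. z \<in> W \<Longrightarrow> z \<in> topspace ?XX \<Longrightarrow> H1 z \<in> U i" and ik: "i \<le> k"
     and cu: "continuous_map (subtopology ?XX W) euclideanreal uf"
     and u01: "\<And>z. z \<in> W \<Longrightarrow> uf z \<in> {0..1}"
     and junc: "\<And>z. z \<in> W \<Longrightarrow> z \<in> topspace ?XX \<Longrightarrow> s i (H1 z, 1 - uf z) = Bp (snd z, 1 - uf z)"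
    for W i uf
  proof -
    have cQf: "continuous_map (Q W) (subtopology ?XX W) fst"
      unfolding Q_def by (rule continuous_map_fst)
    have cQf': "continuous_map (Q W) ?XX fst"
      by (rule continuous_map_into_fulltopology[OF cQf])
    have cQa: "continuous_map (Q W) X (\<lambda>p. fst (fst p))"
      by (rule cm_comp[OF cQf' continuous_map_fst])
    have cQb: "continuous_map (Q W) X (\<lambda>p. snd (fst p))"
      by (rule cm_comp[OF cQf' continuous_map_snd])
    have cQt: "continuous_map (Q W) euclideanreal snd"
      unfolding Q_def by (rule cm_snd_real)
    have cQu: "continuous_map (Q W) euclideanreal (\<lambda>p. uf (fst p))"
      by (rule cm_comp[OF cQf cu])
    have P1: "continuous_map (Q W) X (\<lambda>p. A (fst (fst p), clamp01 (4 * snd p)))"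
      by (intro cAc cQa continuous_intros cQt)
    have P4: "continuous_map (Q W) X (\<lambda>p. A (snd (fst p), clamp01 (4 - 4 * snd p)))"
      by (intro cAc cQb continuous_intros cQt)
    have c01: "continuous_map (Q W) unit_interval (\<lambda>p. clamp01 (g p) * (1 - uf (fst p)))"
      if "continuous_map (Q W) euclideanreal g" for g
    proof (intro continuous_map_into_subtopology)
      show "continuous_map (Q W) euclideanreal (\<lambda>p. clamp01 (g p) * (1 - uf (fst p)))"
        by (intro continuous_intros cm_clamp01_real that cQu)
      show "(\<lambda>p. clamp01 (g p) * (1 - uf (fst p))) \<in> topspace (Q W) \<rightarrow> {0..1}"
      proof
        fix p assume "p \<in> topspace (Q W)"
        then have "fst p \<in> W" by (auto simp: Q_def)
        then have "1 - uf (fst p) \<in> {0..1}" using u01 by auto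
        then show "clamp01 (g p) * (1 - uf (fst p)) \<in> {0..1}" by (intro mult01) auto
      qed
    qed
    have P2: "continuous_map (Q W) X (\<lambda>p. s i (H1 (fst p), clamp01 (4 * snd p - 1) * (1 - uf (fst p))))"
    proof (rule cm_comp[OF _ cs[OF ik]], intro continuous_map_pairedI)
      show "continuous_map (Q W) (subtopology ?XX (U i)) (\<lambda>p. H1 (fst p))"
      proof (rule continuous_map_into_subtopology)
        show "continuous_map (Q W) ?XX (\<lambda>p. H1 (fst p))" by (rule cm_comp[OF cQf' cH1])
        show "(\<lambda>p. H1 (fst p)) \<in> topspace (Q W) \<rightarrow> U i" using W by (auto simp: Q_def)
      qed
      show "continuous_map (Q W) unit_interval (\<lambda>p. clamp01 (4 * snd p - 1) * (1 - uf (fst p)))"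
        by (intro c01 continuous_intros cQt)
    qed
    have P3: "continuous_map (Q W) X (\<lambda>p. Bp (snd (fst p), clamp01 (3 - 4 * snd p) * (1 - uf (fst p))))"
    proof (rule cm_comp[OF _ cBp], intro continuous_map_pairedI cQb)
      show "continuous_map (Q W) unit_interval (\<lambda>p. clamp01 (3 - 4 * snd p) * (1 - uf (fst p)))"
        by (intro c01 continuous_intros cQt)
    qed
    have c34: "continuous_map (Q W) X (\<lambda>p. if snd p \<le> 3/4 then Bp (snd (fst p), clamp01 (3 - 4 * snd p) * (1 - uf (fst p)))
                   else A (snd (fst p), clamp01 (4 - 4 * snd p)))"
    proof (rule continuous_map_cases_le[OF cQt continuous_map_canonical_const
            continuous_map_from_subtopology[OF P3] continuous_map_from_subtopology[OF P4]])
      fix p assume p: "p \<in> topspace (Q W)" "snd p = 3/4"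
      then have "snd (fst p) \<in> topspace X" by (auto simp: Q_def)
      then show "Bp (snd (fst p), clamp01 (3 - 4 * snd p) * (1 - uf (fst p))) = A (snd (fst p), clamp01 (4 - 4 * snd p))"
        using p Bp0 by (simp add: clamp01_def)
    qed
    have c24: "continuous_map (Q W) X (\<lambda>p. if snd p \<le> 1/2 then s i (H1 (fst p), clamp01 (4 * snd p - 1) * (1 - uf (fst p)))
                   else if snd p \<le> 3/4 then Bp (snd (fst p), clamp01 (3 - 4 * snd p) * (1 - uf (fst p)))
                   else A (snd (fst p), clamp01 (4 - 4 * snd p)))"
    proof (rule continuous_map_cases_le[OF cQt continuous_map_canonical_const
            continuous_map_from_subtopology[OF P2] continuous_map_from_subtopology[OF c34]])
      fix p assume p: "p \<in> topspace (Q W)" "snd p = 1/2"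
      then have "fst p \<in> W" "fst p \<in> topspace ?XX" by (auto simp: Q_def)
      then show "s i (H1 (fst p), clamp01 (4 * snd p - 1) * (1 - uf (fst p))) =
           (if snd p \<le> 3/4 then Bp (snd (fst p), clamp01 (3 - 4 * snd p) * (1 - uf (fst p)))
                   else A (snd (fst p), clamp01 (4 - 4 * snd p)))"
        using p junc by (simp add: clamp01_def)
    qed
    show ?thesis unfolding Mst_def
    proof (rule continuous_map_cases_le[OF cQt continuous_map_canonical_const
            continuous_map_from_subtopology[OF P1] continuous_map_from_subtopology[OF c24]])
      fix p assume p: "p \<in> topspace (Q W)" "snd p = 1/4"
      then have pW: "fst p \<in> W" "fst p \<in> topspace ?XX" by (auto simp: Q_def)
      then have H: "H1 (fst p) \<in> U i" using W by auto
      have "s i (H1 (fst p), 0) = A (fst (fst p), 1)"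
        using s0[OF ik, of "fst (H1 (fst p))" "snd (H1 (fst p))"] H by (simp add: H1_def)
      then show "A (fst (fst p), clamp01 (4 * snd p)) =
         (if snd p \<le> 1/2 then s i (H1 (fst p), clamp01 (4 * snd p - 1) * (1 - uf (fst p)))
                   else if snd p \<le> 3/4 then Bp (snd (fst p), clamp01 (3 - 4 * snd p) * (1 - uf (fst p)))
                   else A (snd (fst p), clamp01 (4 - 4 * snd p)))"
        using p by (simp add: clamp01_def)
    qed
  qed
  have Mst0: "Mst sf uf ((a,b), 0) = a" if "a \<in> topspace X" for sf uf a b
    using that A0 by (simp add: Mst_def clamp01_def)
  have Mst1: "Mst sf uf ((a,b), 1) = b" if "b \<in> topspace X" for sf uf a b
    using that A0 by (simp add: Mst_def clamp01_def)
  have cphiF: "continuous_map ?XX euclideanreal (\<lambda>z. phi (fst z))"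
    by (rule cm_comp[OF continuous_map_fst cphi])
  have cphiS: "continuous_map ?XX euclideanreal (\<lambda>z. phi (snd z))"
    by (rule cm_comp[OF continuous_map_snd cphi])
  define u where "u z = min (nu (fst z)) (nu (snd z))" for z :: "'a \<times> 'a"
  define C where "C = {z \<in> topspace ?XX. phi (fst z) \<le> 1/16} \<inter> {z \<in> topspace ?XX. phi (snd z) \<le> 1/16}"
  define B where "B = {z \<in> topspace ?XX. phi (fst z) < 1/32} \<inter> {z \<in> topspace ?XX. phi (snd z) < 1/32}"
  have clC: "closedin ?XX C" unfolding C_def
    by (intro closedin_Int closed_le cphiF cphiS)
  have opB: "openin ?XX B" unfolding B_def
    by (intro openin_Int open_lt cphiF cphiS)
  have BC: "B \<subseteq> C" by (auto simp: B_def C_def)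
  have eB: "e \<in> B" using eX by (simp add: B_def e_def phi0)
  have CV: "C \<subseteq> V m" using H1e m(2) by (auto simp: C_def V_def)
  define pb where "pb p = (if snd p \<le> 1/2 then A (fst (fst p), clamp01 (2 * snd p))
                           else A (snd (fst p), clamp01 (2 - 2 * snd p)))" for p :: "('a \<times> 'a) \<times> real"
  have cpb: "continuous_map (Q W) X pb" if WB: "W \<subseteq> B" for W
  proof -
    have cQf': "continuous_map (Q W) ?XX fst"
      unfolding Q_def by (rule continuous_map_into_fulltopology[OF continuous_map_fst])
    have cQa: "continuous_map (Q W) X (\<lambda>p. fst (fst p))"
      by (rule cm_comp[OF cQf' continuous_map_fst])
    have cQb: "continuous_map (Q W) X (\<lambda>p. snd (fst p))"
      by (rule cm_comp[OF cQf' continuous_map_snd])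
    have cQt: "continuous_map (Q W) euclideanreal snd"
      unfolding Q_def by (rule cm_snd_real)
    have P1: "continuous_map (Q W) X (\<lambda>p. A (fst (fst p), clamp01 (2 * snd p)))"
      by (intro cAc cQa continuous_intros cQt)
    have P2: "continuous_map (Q W) X (\<lambda>p. A (snd (fst p), clamp01 (2 - 2 * snd p)))"
      by (intro cAc cQb continuous_intros cQt)
    show ?thesis unfolding pb_def
    proof (rule continuous_map_cases_le[OF cQt continuous_map_canonical_const
            continuous_map_from_subtopology[OF P1] continuous_map_from_subtopology[OF P2]])
      fix p assume p: "p \<in> topspace (Q W)" "snd p = 1/2"
      then have "fst p \<in> B" using WB by (auto simp: Q_def)
      then have "A (fst (fst p), 1) = x0" "A (snd (fst p), 1) = x0"
        using A1 by (auto simp: B_def)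
      then show "A (fst (fst p), clamp01 (2 * snd p)) = A (snd (fst p), clamp01 (2 - 2 * snd p))"
        using p by (simp add: clamp01_def)
    qed
  qed
  define U' where "U' i = (if i = m then V m else (V i - C) \<union> B)" for i
  define s' where "s' i = (if i = m then Mst (s m) u
                          else (\<lambda>p. if fst p \<in> B then pb p else Mst (s i) (\<lambda>_. 0) p))" for i
  have U'X: "U' i \<subseteq> topspace ?XX" for i
    by (auto simp: U'_def V_def B_def)
  have opU': "openin ?XX (U' i)" if "i \<le> k" for i
    using opV[OF that] opV[OF m(1)] clC opB by (auto simp: U'_def intro!: openin_Un openin_diff)
  have eU': "e \<in> U' i" for i
    using eB BC CV by (auto simp: U'_def)
  have cont': "continuous_map (prod_topology (subtopology ?XX (U' i)) unit_interval) X (s' i)" if ik: "i \<le> k" for i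
  proof (cases "i = m")
    case True
    have cu: "continuous_map (subtopology ?XX (V m)) euclideanreal u"
      unfolding u_def
      by (intro continuous_map_from_subtopology continuous_intros cm_comp[OF continuous_map_fst cnu]
          cm_comp[OF continuous_map_snd cnu])
    have "continuous_map (Q (V m)) X (Mst (s m) u)"
    proof (rule gen[OF _ m(1) cu])
      show "H1 z \<in> U m" if "z \<in> V m" for z using that by (simp add: V_def)
      show "u z \<in> {0..1}" for z using nu01 by (simp add: u_def min_def)
      show "s m (H1 z, 1 - u z) = Bp (snd z, 1 - u z)" if z: "z \<in> V m" "z \<in> topspace ?XX" for z
      proof (cases "u z > 0")
        case True
        then have "phi (fst z) < 1/16" "phi (snd z) < 1/16" using nupos by (auto simp: u_def)
        then show ?thesis using H1e[of z] z Bpg[of "snd z"] by (simp add: gam_def)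
      next
        case False
        then have "u z = 0" using nu01[of "fst z"] nu01[of "snd z"] by (auto simp: u_def min_def not_less)
        moreover have "H1 z \<in> U m" using z by (simp add: V_def)
        ultimately show ?thesis using s1[OF m(1), of "fst (H1 z)" "snd (H1 z)"] by (simp add: H1_def)
      qed
    qed
    then show ?thesis using True by (simp add: Q_def U'_def s'_def)
  next
    case False
    let ?W = "U' i"
    have cQf': "continuous_map (Q ?W) ?XX fst"
      unfolding Q_def by (rule continuous_map_into_fulltopology[OF continuous_map_fst])
    have opVC: "openin ?XX (V i - C)" using opV[OF ik] clC by (rule openin_diff)
    show ?thesis unfolding Q_def[symmetric]
    proof (rule paste_open2[OF openin_continuous_map_preimage[OF cQf' opB]
             openin_continuous_map_preimage[OF cQf' opVC]])
      show "topspace (Q ?W) \<subseteq> {p \<in> topspace (Q ?W). fst p \<in> B} \<union> {p \<in> topspace (Q ?W). fst p \<in> V i - C}"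
        using False by (auto simp: Q_def U'_def)
      have "continuous_map (Q (?W \<inter> B)) X pb" by (rule cpb) auto
      then show "continuous_map (subtopology (Q ?W) {p \<in> topspace (Q ?W). fst p \<in> B}) X pb"
        by (simp only: Q_def subQ)
      have "continuous_map (Q (?W \<inter> (V i - C))) X (Mst (s i) (\<lambda>_. 0))"
      proof (rule gen[OF _ ik])
        show "H1 z \<in> U i" if "z \<in> ?W \<inter> (V i - C)" for z using that by (simp add: V_def)
        show "s i (H1 z, 1 - 0) = Bp (snd z, 1 - 0)" if z: "z \<in> ?W \<inter> (V i - C)" for z
        proof -
          have "H1 z \<in> U i" using z by (simp add: V_def)
          then show ?thesis using s1[OF ik, of "fst (H1 z)" "snd (H1 z)"] by (simp add: H1_def)
        qed
      qed auto
      then show "continuous_map (subtopology (Q ?W) {p \<in> topspace (Q ?W). fst p \<in> V i - C}) X (Mst (s i) (\<lambda>_. 0))"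
        by (simp only: Q_def subQ)
      show "s' i p = pb p" if "p \<in> topspace (Q ?W)" "p \<in> {p \<in> topspace (Q ?W). fst p \<in> B}" for p
        using that False by (simp add: s'_def)
      show "s' i p = Mst (s i) (\<lambda>_. 0) p" if "p \<in> topspace (Q ?W)" "p \<in> {p \<in> topspace (Q ?W). fst p \<in> V i - C}" for p
        using that False BC by (auto simp: s'_def)
    qed
  qed
  have ends': "s' i ((a,b),0) = a \<and> s' i ((a,b),1) = b" if "(a,b) \<in> U' i" for i a b
  proof -
    have ab: "a \<in> topspace X" "b \<in> topspace X" using that U'X by auto
    then show ?thesis using Mst0[OF ab(1)] Mst1[OF ab(2)] A0
      by (auto simp: s'_def pb_def clamp01_def)
  qed
  have stat': "s' i (e, t) = x0" if "t \<in> {0..1}" for i t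
  proof (cases "i = m")
    case True
    have ue: "u e = 1" by (simp add: u_def e_def nux0)
    have He: "H1 e = e" using H1e[of e] eX by (simp add: e_def phi0)
    have "s m (e, 0) = x0" using gam0 by (simp add: gam_def)
    moreover have "Bp (x0, 0) = x0" using Bp0[OF x0] A1[OF x0] phi0 by simp
    ultimately show ?thesis using True ue He Ax0
      by (simp add: s'_def Mst_def e_def)
  next
    case False
    then show ?thesis using eB Ax0 by (simp add: s'_def pb_def e_def)
  qed
  have cover': "topspace ?XX \<subseteq> (\<Union>i\<le>k. U' i)"
  proof
    fix z assume z: "z \<in> topspace ?XX"
    show "z \<in> (\<Union>i\<le>k. U' i)"
    proof (cases "z \<in> C")
      case True
      then show ?thesis using CV m(1) by (auto simp: U'_def)
    next
      case False
      have "H1 z \<in> topspace ?XX" using cH1 z by (meson continuous_map_image_subset_topspace image_subset_iff)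
      then obtain j where j: "j \<le> k" "H1 z \<in> U j" using cover by blast
      then have "z \<in> V j" using z by (simp add: V_def)
      then have "z \<in> U' j" using False by (auto simp: U'_def)
      then show ?thesis using j(1) by blast
    qed
  qed
  show ?thesis unfolding tc_pointed_cover_def
  proof (intro exI conjI allI impI)
    fix i assume ik: "i \<le> k"
    show "openin ?XX (U' i)" by (rule opU'[OF ik])
    show "motion_planner X (U' i) (s' i)" unfolding motion_planner_def
      using cont'[OF ik] ends' by blast
    show "(x0, x0) \<in> U' i" using eU' by (simp add: e_def)
    show "\<forall>t\<in>{0..1}. s' i ((x0, x0), t) = x0" using stat' by (simp add: e_def)
  qed (rule cover')
qed

lemma pointed_imp_cover: "tc_pointed_cover X x0 k \<Longrightarrow> tc_cover X k"
  unfolding tc_pointed_cover_def tc_cover_def by blast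

theorem mainTheorem11:
  fixes X :: "'a topology" and x0 :: 'a
  assumes "path_connected_space X"
    and "locally_equiconnected X"
    and "x0 \<in> topspace X"
  shows "TC X = TC_pointed X x0"
proof (rule lec_data[OF assms(2,3)])
  fix phi lam
  assume d1: "continuous_map X euclideanreal phi" and d2: "phi x0 = 0"
    and d3: "continuous_map (prod_topology (subtopology X {x \<in> topspace X. phi x < 1}) unit_interval) X lam"
    and d4: "\<And>x. x \<in> topspace X \<Longrightarrow> lam (x,0) = x"
    and d5: "\<And>x. x \<in> topspace X \<Longrightarrow> phi x < 1 \<Longrightarrow> lam (x,1) = x0"
    and d6: "\<And>r. r \<in> {0..1} \<Longrightarrow> lam (x0, r) = x0"
  have eq: "tc_cover X k \<longleftrightarrow> tc_pointed_cover X x0 k" for k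
  proof
    assume "tc_cover X k"
    note pf = pointed_from_cover[OF assms(3) d1 d2 d3 d4 d5 d6 this]
    show "tc_pointed_cover X x0 k" using pf by simp
  next
    assume "tc_pointed_cover X x0 k"
    then show "tc_cover X k" by (rule pointed_imp_cover)
  qed
  have eqf: "tc_cover X = tc_pointed_cover X x0" using eq by (rule ext)
  show ?thesis by (simp add: TC_def TC_pointed_def eqf)
qed

end
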